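(* Let $k,n$ be integers with $3\le k\le n/2$. Then coefficient-wise $i(U_{2,n},t)\le i(U_{k,n},t)$, i.e. for every $m\ge0$ the coefficient of $t^m$ in $i(U_{2,n},t)$ is at most the coefficient of $t^m$ in $i(U_{k,n},t)$.
   Context: $U_{k,n}$ denotes the uniform matroid of rank $k$ on $[n]$ (all $k$-subsets are bases), and $i(U_{k,n},t)$ is the Ehrhart polynomial of its matroid polytope $\mathrm{conv}\{\sum_{b\in B}e_b: B\subseteq[n],|B|=k\}$ (the hypersimplex), i.e. the polynomial counting lattice points in its $t$-th dilate. *)

theory Defs
  imports "HOL-Analysis.Analysis" "HOL-Computational_Algebra.Polynomial"
begin

text \<open>The ground set [n] is modelled by a finite type 'n with CARD('n) = n;
  points of R^n are elements of real^'n.\<close>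

definition uniform_matroid_polytope :: "nat \<Rightarrow> (real^'n) set" where
  "uniform_matroid_polytope k =
     convex hull {(\<chi> i. if i \<in> B then 1 else 0) | B :: 'n set. card B = k}"

definition lattice_count :: "(real^'n) set \<Rightarrow> nat \<Rightarrow> nat" where
  "lattice_count P t = card {x. (\<forall>i. x $ i \<in> \<int>) \<and> x \<in> (\<lambda>y. real t *\<^sub>R y) ` P}"

definition ehrhart_poly :: "(real^'n) set \<Rightarrow> real poly" where
  "ehrhart_poly P = (THE p. \<forall>t::nat. poly p (real t) = real (lattice_count P t))"

end

theory Submission
  imports Defs "HOL-Computational_Algebra.Formal_Power_Series" "HOL-Computational_Algebra.Polynomial_FPS"
begin


definition SG :: "real poly \<Rightarrow> nat \<Rightarrow> bool" where
  "SG p d \<longleftrightarrow> (\<forall>i>d. coeff p i = 0) \<and> (\<forall>i\<le>d. coeff p (d - i) = coeff p i)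
     \<and> (\<forall>i. 0 \<le> coeff p i) \<and> (\<forall>i\<le>d. coeff p 0 \<le> coeff p i)
     \<and> (\<forall>i. 1 \<le> i \<and> i < d \<longrightarrow> coeff p 1 \<le> coeff p i)"

lemma SG_0: "SG 0 d" by (simp add: SG_def)

lemma SG_add: "SG p d \<Longrightarrow> SG q d \<Longrightarrow> SG (p + q) d"
  unfolding SG_def by (auto intro: add_mono add_nonneg_nonneg)

lemma SG_smult: "SG p d \<Longrightarrow> 0 \<le> c \<Longrightarrow> SG (smult c p) d"
  unfolding SG_def by (auto intro: mult_left_mono)

lemma SG_sum: "(\<And>x. x \<in> A \<Longrightarrow> SG (f x) d) \<Longrightarrow> SG (\<Sum>x\<in>A. f x) d"
proof (induction A rule: infinite_finite_induct)
  case (infinite A) then show ?case by (simp add: SG_0)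
next
  case empty then show ?case by (simp add: SG_0)
next
  case (insert x F) then show ?case by (simp add: SG_add)
qed

lemma sum_atMost_rev: "(\<Sum>j\<le>(a::nat). f j) = (\<Sum>j\<le>a. f (a - j))"
  by (rule sum.reindex_bij_witness[of _ "\<lambda>j. a - j" "\<lambda>j. a - j"]) (simp_all add: diff_diff_cancel)

lemma coeff_mult_double:
  fixes p q :: "real poly"
  assumes "\<forall>i>a. coeff p i = 0" "\<forall>i>b. coeff q i = 0"
  shows "coeff (p*q) k = (\<Sum>j\<le>a. \<Sum>l\<le>b. if j + l = k then coeff p j * coeff q l else 0)"
proof -
  have "p * q = (\<Sum>j\<le>a. monom (coeff p j) j) * (\<Sum>l\<le>b. monom (coeff q l) l)"
    using poly_as_sum_of_monoms'[OF degree_le[OF assms(1)]]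
          poly_as_sum_of_monoms'[OF degree_le[OF assms(2)]] by simp
  also have "\<dots> = (\<Sum>j\<le>a. \<Sum>l\<le>b. monom (coeff p j * coeff q l) (j + l))"
    by (simp add: sum_product mult_monom)
  finally show ?thesis by (simp add: coeff_sum coeff_monom)
qed

lemma two_le_sum:
  fixes f :: "nat \<Rightarrow> real"
  assumes "finite A" "j1 \<in> A" "j2 \<in> A" "j1 \<noteq> j2" "\<And>j. j \<in> A \<Longrightarrow> 0 \<le> f j"
  shows "f j1 + f j2 \<le> sum f A"
proof -
  have "sum f {j1, j2} \<le> sum f A"
    by (rule sum_mono2) (use assms in auto)
  then show ?thesis using assms(4) by simp
qed

lemma SG_mult:
  assumes P: "SG p a" and Q: "SG q b"
  shows "SG (p * q) (a + b)"
proof -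
  have pv: "\<forall>i>a. coeff p i = 0" and ps: "\<And>i. i \<le> a \<Longrightarrow> coeff p (a - i) = coeff p i"
    and pn: "\<And>i. 0 \<le> coeff p i" and p0: "\<And>i. i \<le> a \<Longrightarrow> coeff p 0 \<le> coeff p i"
    and p1: "\<And>i. 1 \<le> i \<Longrightarrow> i < a \<Longrightarrow> coeff p 1 \<le> coeff p i"
    using P unfolding SG_def by auto
  have qv: "\<forall>i>b. coeff q i = 0" and qs: "\<And>i. i \<le> b \<Longrightarrow> coeff q (b - i) = coeff q i"
    and qn: "\<And>i. 0 \<le> coeff q i" and q0: "\<And>i. i \<le> b \<Longrightarrow> coeff q 0 \<le> coeff q i"
    and q1: "\<And>i. 1 \<le> i \<Longrightarrow> i < b \<Longrightarrow> coeff q 1 \<le> coeff q i"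
    using Q unfolding SG_def by auto
  define G where "G = coeff (p * q)"
  have Gd: "\<And>k. G k = (\<Sum>j\<le>a. \<Sum>l\<le>b. if j + l = k then coeff p j * coeff q l else 0)"
    unfolding G_def by (rule coeff_mult_double[OF pv qv])
  have Gm: "\<And>k. G k = (\<Sum>j\<le>k. coeff p j * coeff q (k - j))"
    unfolding G_def by (simp add: coeff_mult)
  have vanish: "\<forall>i>a+b. G i = 0"
    unfolding Gd by (auto intro!: sum.neutral)
  have nonneg: "\<And>i. 0 \<le> G i"
    unfolding Gm by (auto intro!: sum_nonneg mult_nonneg_nonneg pn qn)
  have sym: "\<And>k. k \<le> a + b \<Longrightarrow> G (a + b - k) = G k"
  proof -
    fix k assume k: "k \<le> a + b"
    have "G (a + b - k) = (\<Sum>j\<le>a. \<Sum>l\<le>b. if (a - j) + (b - l) = a + b - k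
              then coeff p (a - j) * coeff q (b - l) else 0)"
      unfolding Gd by (subst sum_atMost_rev) (subst (2) sum_atMost_rev, rule refl)
    also have "\<dots> = (\<Sum>j\<le>a. \<Sum>l\<le>b. if j + l = k then coeff p j * coeff q l else 0)"
      by (intro sum.cong refl) (use k ps qs in auto)
    finally show "G (a + b - k) = G k" using Gd by simp
  qed
  have g0: "\<And>i. i \<le> a + b \<Longrightarrow> G 0 \<le> G i"
  proof -
    fix i assume i: "i \<le> a + b"
    define j where "j = min i a"
    have "G 0 = coeff p 0 * coeff q 0" unfolding Gm by simp
    also have "\<dots> \<le> coeff p j * coeff q (i - j)"
      by (rule mult_mono) (use i pn qn p0 q0 in \<open>auto simp: j_def\<close>)
    also have "\<dots> \<le> G i" unfolding Gm
      by (rule member_le_sum) (auto simp: j_def intro: mult_nonneg_nonneg pn qn)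
    finally show "G 0 \<le> G i" .
  qed
  have tl1: "coeff p j * coeff q (i - j) \<le> G i" if "j \<le> i" for i j
    unfolding Gm by (rule member_le_sum) (use that in \<open>auto intro: mult_nonneg_nonneg pn qn\<close>)
  have G1: "G 1 = coeff p 0 * coeff q 1 + coeff p 1 * coeff q 0"
    unfolding Gm by simp
  have gh: "G 1 \<le> G i" if i1: "1 \<le> i" and ia: "i < a + b" and ih: "2 * i \<le> a + b" for i
  proof -
    have tl: "coeff p j1 * coeff q (i - j1) + coeff p j2 * coeff q (i - j2) \<le> G i"
      if "j1 \<le> i" "j2 \<le> i" "j1 \<noteq> j2" for j1 j2
      unfolding Gm by (rule two_le_sum) (use that in \<open>auto intro: mult_nonneg_nonneg pn qn\<close>)
    show ?thesis
    proof (cases "a = 0")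
      case True
      then have "coeff p 1 = 0" using pv by auto
      moreover have "coeff p 0 * coeff q 1 \<le> coeff p 0 * coeff q i"
        by (rule mult_left_mono) (use q1 i1 ia True pn in auto)
      moreover have "coeff p 0 * coeff q i \<le> G i" using tl1[of 0 i] by simp
      ultimately show ?thesis using G1 by simp
    next
      case a0: False
      show ?thesis
      proof (cases "b = 0")
        case True
        then have "coeff q 1 = 0" using qv by auto
        moreover have "coeff p 1 * coeff q 0 \<le> coeff p i * coeff q 0"
          by (rule mult_right_mono) (use p1 i1 ia True qn in auto)
        moreover have "coeff p i * coeff q 0 \<le> G i" using tl1[of i i] by simp
        ultimately show ?thesis using G1 by simp
      next
        case b0: False
        show ?thesis
        proof (cases "i < a")
          case True
          have "coeff p 0 * coeff q 1 \<le> coeff p (i - 1) * coeff q (i - (i - 1))"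
            by (rule mult_mono) (use i1 True p0 pn qn in auto)
          moreover have "coeff p 1 * coeff q 0 \<le> coeff p i * coeff q (i - i)"
            by (rule mult_mono) (use i1 True p1 pn qn in auto)
          moreover have "coeff p (i - 1) * coeff q (i - (i - 1)) + coeff p i * coeff q (i - i) \<le> G i"
            by (rule tl) (use i1 in auto)
          ultimately show ?thesis using G1 by linarith
        next
          case ia2: False
          show ?thesis
          proof (cases "i < b")
            case True
            have "coeff p 0 * coeff q 1 \<le> coeff p 0 * coeff q (i - 0)"
              by (rule mult_mono) (use i1 True q1 pn qn in auto)
            moreover have "coeff p 1 * coeff q 0 \<le> coeff p 1 * coeff q (i - 1)"
              by (rule mult_mono) (use i1 True q0 pn qn in auto)
            moreover have "coeff p 0 * coeff q (i - 0) + coeff p 1 * coeff q (i - 1) \<le> G i"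
              by (rule tl) (use i1 in auto)
            ultimately show ?thesis using G1 by linarith
          next
            case False
            with ia2 ih have ab: "a = i" "b = i" by auto
            show ?thesis
            proof (cases "i = 1")
              case True then show ?thesis by simp
            next
              case i1': False
              show ?thesis
              proof (cases "i = 2")
                case True
                have G2: "G 2 = coeff p 0 * coeff q 2 + coeff p 1 * coeff q 1 + coeff p 2 * coeff q 0"
                  unfolding Gm by (simp add: numeral_2_eq_2)
                have "coeff p 2 = coeff p 0" using ps[of 0] ab True by simp
                moreover have "coeff q 2 = coeff q 0" using qs[of 0] ab True by simp
                moreover have "0 \<le> (coeff p 1 - coeff p 0) * (coeff q 1 - coeff q 0)"
                  using p0[of 1] q0[of 1] ab True by (auto intro!: mult_nonneg_nonneg)
                moreover have "0 \<le> coeff p 0 * coeff q 0" by (intro mult_nonneg_nonneg pn qn)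
                ultimately show ?thesis using G1 G2 True by (simp add: algebra_simps)
              next
                case False
                with i1 i1' have i3: "3 \<le> i" by auto
                have "coeff p 1 * coeff q 0 \<le> coeff p 1 * coeff q (i - 1)"
                proof -
                  have "coeff q (i - 1) = coeff q 1" using qs[of 1] ab i3 by simp
                  then show ?thesis using q0[of 1] ab i3 pn by (auto intro: mult_left_mono)
                qed
                moreover have "coeff p 0 * coeff q 1 \<le> coeff p (i - 1) * coeff q (i - (i - 1))"
                  using i3 ab by (auto intro!: mult_right_mono p0 qn)
                moreover have "coeff p 1 * coeff q (i - 1) + coeff p (i - 1) * coeff q (i - (i - 1)) \<le> G i"
                  by (rule tl) (use i3 in auto)
                ultimately show ?thesis using G1 by linarith
              qed
            qed
          qed
        qed
      qed
    qed
  qed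
  have g1: "\<And>i. 1 \<le> i \<Longrightarrow> i < a + b \<Longrightarrow> G 1 \<le> G i"
  proof -
    fix i assume i: "1 \<le> i" "i < a + b"
    show "G 1 \<le> G i"
    proof (cases "2 * i \<le> a + b")
      case True then show ?thesis using gh i by auto
    next
      case False
      then have "G 1 \<le> G (a + b - i)" using i by (intro gh) auto
      also have "\<dots> = G i" using sym i by auto
      finally show ?thesis .
    qed
  qed
  show ?thesis unfolding SG_def G_def[symmetric]
    using vanish sym nonneg g0 g1 by auto
qed


definition qint :: "nat \<Rightarrow> real poly" where
  "qint a = (\<Sum>i<a. monom 1 i)"

lemma coeff_qint: "coeff (qint a) i = (if i < a then 1 else 0)"
  by (simp add: qint_def coeff_sum)

lemma SG_qint: "SG (qint (Suc a)) a"
  unfolding SG_def coeff_qint by auto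

fun R :: "nat \<Rightarrow> nat \<Rightarrow> real poly" where
  "R 0 j = (if j = 0 then 1 else 0)"
| "R (Suc n) 0 = 0"
| "R (Suc n) (Suc j) = (\<Sum>a<Suc n. smult (fact n / fact (n - a)) (qint (Suc a) * R (n - a) j))"

lemma R_gt: "n < j \<Longrightarrow> R n j = 0"
proof (induction n arbitrary: j rule: less_induct)
  case (less n)
  show ?case
  proof (cases n)
    case 0 then show ?thesis using less by simp
  next
    case (Suc n')
    then obtain j' where j: "j = Suc j'" using less by (cases j) auto
    have "R (n' - a) j' = 0" if "a < Suc n'" for a
      using less.IH[of "n' - a" j'] Suc j less.prems that by auto
    then show ?thesis using Suc j by simp
  qed
qed

lemma SG_1: "SG 1 0" by (simp add: SG_def coeff_1)

lemma SG_R: "SG (R n j) (n - j)"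
proof (induction n arbitrary: j rule: less_induct)
  case (less n)
  show ?case
  proof (cases n)
    case 0 then show ?thesis by (simp add: SG_0 SG_1)
  next
    case (Suc n')
    show ?thesis
    proof (cases j)
      case 0 then show ?thesis using Suc by (simp add: SG_0)
    next
      case (Suc j')
      have each: "SG (smult (fact n' / fact (n' - a)) (qint (Suc a) * R (n' - a) j')) (n' - j')"
        if "a < Suc n'" for a
      proof (cases "j' \<le> n' - a")
        case True
        have "SG (qint (Suc a) * R (n' - a) j') (a + (n' - a - j'))"
          by (rule SG_mult[OF SG_qint less.IH]) (use \<open>n = Suc n'\<close> in auto)
        moreover have "a + (n' - a - j') = n' - j'" using True that by auto
        ultimately show ?thesis by (intro SG_smult) auto
      next
        case False
        then show ?thesis by (simp add: R_gt SG_0)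
      qed
      have eq: "R n j = (\<Sum>a<Suc n'. smult (fact n' / fact (n' - a)) (qint (Suc a) * R (n' - a) j'))"
        using \<open>n = Suc n'\<close> Suc by simp
      show ?thesis unfolding eq using \<open>n = Suc n'\<close> Suc
        by (intro SG_sum) (simp add: each)
    qed
  qed
qed

fun eul :: "nat \<Rightarrow> nat \<Rightarrow> nat" where
  "eul 0 j = (if j = 0 then 1 else 0)"
| "eul (Suc m) j = Suc j * eul m j + (if j = 0 then 0 else (Suc m - j) * eul m (j - 1))"

lemma eul_zero: "0 < j \<Longrightarrow> m \<le> j \<Longrightarrow> eul m j = 0"
proof (induction m arbitrary: j)
  case 0 then show ?case by simp
next
  case (Suc m)
  then show ?case by (cases "j = Suc m") auto
qed

lemma eul_0: "eul m 0 = 1"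
  by (induction m) auto

lemma eul_pos: "j < m \<Longrightarrow> 1 \<le> eul m j"
proof (induction m arbitrary: j)
  case 0 then show ?case by simp
next
  case (Suc m)
  show ?case
  proof (cases "j < m")
    case True
    then have "1 \<le> eul m j" using Suc by auto
    then show ?thesis by simp
  next
    case False
    then have "j = m" using Suc by auto
    show ?thesis
    proof (cases "m = 0")
      case True then show ?thesis using \<open>j = m\<close> by simp
    next
      case False
      then have "1 \<le> eul m (j - 1)" using Suc.IH \<open>j = m\<close> by auto
      then show ?thesis using \<open>j = m\<close> False by simp
    qed
  qed
qed

lemma eul_sym: "j < m \<Longrightarrow> eul m (m - 1 - j) = eul m j"
proof (induction m arbitrary: j)
  case 0 then show ?case by simp
next
  case (Suc m)
  have top: "eul (Suc m) m = 1"
  proof (cases "m = 0")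
    case True then show ?thesis by simp
  next
    case False
    have "eul m m = 0" using False by (simp add: eul_zero)
    moreover have "eul m (m - 1) = 1" using Suc.IH[of 0] False by (simp add: eul_0)
    ultimately show ?thesis using False by simp
  qed
  show ?case
  proof (cases "j = 0")
    case True then show ?thesis using top by (simp add: eul_0)
  next
    case j0: False
    show ?thesis
    proof (cases "j = m")
      case True then show ?thesis using top by (simp add: eul_0)
    next
      case False
      with j0 Suc.prems have jm: "0 < j" "j < m" by auto
      have e1: "eul m (m - j) = eul m (j - 1)" using Suc.IH[of "j - 1"] jm
        by (simp add: Suc_diff_Suc)
      have e2: "eul m (m - 1 - j) = eul m j" using Suc.IH[of j] jm by simp
      have "eul (Suc m) (Suc m - 1 - j) = Suc (m - j) * eul m (m - j) + (Suc m - (m - j)) * eul m (m - j - 1)"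
        using jm by simp
      also have "\<dots> = (Suc m - j) * eul m (j - 1) + Suc j * eul m j"
        using e1 e2 jm by (simp add: Suc_diff_le)
      also have "\<dots> = eul (Suc m) j" using jm by simp
      finally show ?thesis .
    qed
  qed
qed

lemma eul_good: "1 \<le> j \<Longrightarrow> j + 1 < m \<Longrightarrow> eul m 1 \<le> eul m j"
proof (induction m arbitrary: j)
  case 0 then show ?case by simp
next
  case (Suc m)
  have e1: "eul (Suc m) 1 = 2 * eul m 1 + m" by (simp add: eul_0)
  show ?case
  proof (cases "j = 1")
    case True then show ?thesis by simp
  next
    case j1: False
    show ?thesis
    proof (cases "j + 1 < m")
      case True
      have a: "eul m 1 \<le> eul m j" using Suc.IH[of j] True j1 Suc.prems by auto
      have b: "eul m 1 \<le> eul m (j - 1)" using Suc.IH[of "j - 1"] True j1 Suc.prems by auto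
      have c: "1 \<le> eul m 1" using eul_pos[of 1 m] True by auto
      have "eul (Suc m) j = Suc j * eul m j + (Suc m - j) * eul m (j - 1)"
        using Suc.prems by simp
      also have "\<dots> \<ge> Suc j * eul m 1 + (Suc m - j) * eul m 1"
        using a b by (intro add_mono mult_le_mono2) auto
      finally have "eul (Suc m) j \<ge> (m + 2) * eul m 1"
        using True by (simp add: algebra_simps)
      moreover have "(m + 2) * eul m 1 = 2 * eul m 1 + m * eul m 1" by (simp add: algebra_simps)
      moreover have "m * eul m 1 \<ge> m" using c by simp
      ultimately show ?thesis using e1 by linarith
    next
      case False
      then have jm: "j = m - 1" "2 \<le> j" using Suc.prems j1 by auto
      have s1: "eul m (m - 1) = 1" using eul_sym[of 0 m] jm by (simp add: eul_0)
      have s2: "eul m (m - 2) = eul m 1" using eul_sym[of 1 m] jm by (simp add: numeral_2_eq_2)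
      have X: "eul (Suc m) j = m * eul m (m - 1) + 2 * eul m (m - 2)"
        using jm by (simp add: numeral_2_eq_2 Suc_diff_Suc)
      have "eul (Suc m) j = m + 2 * eul m 1" unfolding X s1 s2 by simp
      then show ?thesis using e1 by linarith
    qed
  qed
qed

definition E :: "nat \<Rightarrow> real poly" where
  "E m = (\<Sum>j\<le>m. monom (real (eul m j)) j)"

lemma coeff_E: "coeff (E m) i = real (eul m i)"
proof -
  have "coeff (E m) i = (if i \<le> m then real (eul m i) else 0)"
    by (simp add: E_def coeff_sum)
  then show ?thesis by (auto simp: eul_zero)
qed

lemma SG_E: "SG (E m) (m - 1)"
  unfolding SG_def coeff_E
proof (intro conjI allI impI)
  fix i show "i > m - 1 \<Longrightarrow> real (eul m i) = 0" by (cases "m = 0") (auto simp: eul_zero)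
next
  fix i assume "i \<le> m - 1"
  then show "real (eul m (m - 1 - i)) = real (eul m i)"
    using eul_sym[of i m] by (cases "m = 0") auto
next
  fix i assume "i \<le> m - 1"
  then show "real (eul m 0) \<le> real (eul m i)"
    using eul_pos[of i m] by (cases "i = 0") (auto simp: eul_0)
next
  fix i assume "1 \<le> i \<and> i < m - 1"
  then show "real (eul m 1) \<le> real (eul m i)" using eul_good[of i m] by auto
qed auto

definition Sf :: "nat \<Rightarrow> real fps" where
  "Sf m = Abs_fps (\<lambda>i. real (i + 1) ^ m)"

lemma Sf_Suc: "Sf (Suc m) = fps_deriv (fps_X * Sf m)"
  by (rule fps_ext) (simp add: Sf_def fps_deriv_nth fps_X_mult_nth algebra_simps)

lemma one_minus_X_mult_nth:
  "fps_nth ((1 - fps_X) * (F :: real fps)) n = fps_nth F n - (if n = 0 then 0 else fps_nth F (n - 1))"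
proof -
  have "(1 - fps_X) * F = F - fps_X * F" by (simp add: algebra_simps)
  then show ?thesis by (simp add: fps_X_mult_nth)
qed

lemma E_rec: "fps_of_poly (E (Suc m)) =
   (1 + of_nat m * fps_X) * fps_of_poly (E m) + fps_X * (1 - fps_X) * fps_deriv (fps_of_poly (E m))"
proof (rule fps_ext)
  fix n
  define F where "F = fps_of_poly (E m)"
  have F: "fps_nth F i = real (eul m i)" for i by (simp add: F_def coeff_E)
  have XD: "fps_nth (fps_X * fps_deriv F) i = of_nat i * fps_nth F i" for i
    by (simp add: fps_mult_fps_X_deriv_shift)
  have "fps_nth ((1 + of_nat m * fps_X) * F + fps_X * (1 - fps_X) * fps_deriv F) n
      = fps_nth F n + (if n = 0 then 0 else of_nat m * fps_nth F (n - 1))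
        + fps_nth ((1 - fps_X) * (fps_X * fps_deriv F)) n"
  proof -
    have "(1 + of_nat m * fps_X) * F + fps_X * (1 - fps_X) * fps_deriv F
        = F + of_nat m * (fps_X * F) + (1 - fps_X) * (fps_X * fps_deriv F)"
      by (simp add: algebra_simps)
    then have "fps_nth ((1 + of_nat m * fps_X) * F + fps_X * (1 - fps_X) * fps_deriv F) n
      = fps_nth F n + fps_nth (of_nat m * (fps_X * F)) n + fps_nth ((1 - fps_X) * (fps_X * fps_deriv F)) n"
      by (simp only: fps_add_nth)
    then show ?thesis by (simp add: fps_X_mult_nth fps_mult_of_nat_nth)
  qed
  also have "\<dots> = fps_nth F n + (if n = 0 then 0 else of_nat m * fps_nth F (n - 1))
        + (of_nat n * fps_nth F n - (if n = 0 then 0 else of_nat (n - 1) * fps_nth F (n - 1)))"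
    by (simp only: one_minus_X_mult_nth XD)
  also have "\<dots> = real (eul (Suc m) n)"
  proof (cases "n = 0")
    case True then show ?thesis by (simp add: F)
  next
    case False
    show ?thesis
    proof (cases "n \<le> Suc m")
      case True
      then obtain k where k: "Suc m = n + k" using le_Suc_ex by blast
      have "eul (Suc m) n = Suc n * eul m n + (Suc m - n) * eul m (n - 1)"
        using False by simp
      moreover have "Suc m - n = k" using k by simp
      ultimately have "eul (Suc m) n = Suc n * eul m n + k * eul m (n - 1)" by simp
      then have "real (eul (Suc m) n) = (real n + 1) * real (eul m n) + real k * real (eul m (n - 1))"
        by (simp add: algebra_simps)
      moreover have "real k = real m + 1 - real n" using k by simp
      moreover have "real (n - 1) = real n - 1" using False by simp
      ultimately show ?thesis using False by (simp add: F algebra_simps)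
    next
      case False
      then have "eul m (n - 1) = 0" "eul m n = 0" by (auto intro: eul_zero)
      then show ?thesis using False by (simp add: F)
    qed
  qed
  finally show "fps_nth (fps_of_poly (E (Suc m))) n = fps_nth ((1 + of_nat m * fps_X) * fps_of_poly (E m)
     + fps_X * (1 - fps_X) * fps_deriv (fps_of_poly (E m))) n"
    by (simp add: F_def coeff_E)
qed

lemma eul_ring_aux:
  fixes u x w d s c :: "'a::comm_ring_1"
  assumes "u = 1 - x"
  shows "u * (u * w) * (x * d + s) = (1 + c * x) * (u * w * s) + x * u * (u * w * d - (c + 1) * w * s)"
  unfolding assms by (simp add: algebra_simps)

lemma eulerian_fps: "(1 - fps_X) ^ Suc m * Sf m = fps_of_poly (E m)"
proof (induction m)
  case 0
  have "(1 - fps_X) * Sf 0 = (1 :: real fps)"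
    by (rule fps_ext) (simp add: one_minus_X_mult_nth Sf_def)
  moreover have "E 0 = 1" by (simp add: E_def)
  ultimately show ?case by simp
next
  case (Suc m)
  define U :: "real fps" where "U = 1 - fps_X"
  define S where "S = Sf m"
  have IH: "U ^ Suc m * S = fps_of_poly (E m)" using Suc by (simp add: U_def S_def)
  have dU: "fps_deriv U = -1" by (simp add: U_def)
  have dP: "fps_deriv (U ^ Suc m) = - (of_nat (Suc m) * U ^ m)"
  proof -
    have "fps_deriv (U ^ Suc m) = of_nat (Suc m) * fps_deriv U * U ^ m"
      by (simp only: fps_deriv_power' diff_Suc_1)
    then show ?thesis unfolding dU by (simp add: algebra_simps)
  qed
  have dE: "fps_deriv (fps_of_poly (E m)) = U ^ Suc m * fps_deriv S - of_nat (Suc m) * U ^ m * S"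
    unfolding IH[symmetric] fps_deriv_mult dP by (simp add: algebra_simps)
  have "(1 - fps_X) ^ Suc (Suc m) * Sf (Suc m) = U ^ Suc (Suc m) * (fps_X * fps_deriv S + S)"
    by (simp add: Sf_Suc U_def S_def fps_deriv_mult algebra_simps)
  also have "\<dots> = (1 + of_nat m * fps_X) * (U ^ Suc m * S) + fps_X * U * (U ^ Suc m * fps_deriv S - of_nat (Suc m) * U ^ m * S)"
    using eul_ring_aux[OF U_def, of "U ^ m" "fps_deriv S" S "of_nat m"] by (simp add: power_Suc)
  also have "\<dots> = fps_of_poly (E (Suc m))"
    unfolding E_rec dE unfolding IH[symmetric] U_def[symmetric] by (rule refl)
  finally show ?case .
qed


definition Vv :: "real \<Rightarrow> real \<Rightarrow> nat \<Rightarrow> real" where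
  "Vv x Y n = (\<Sum>j\<le>n. Y ^ j * poly (R n j) x)"

lemma Vv_ext: "m \<le> n \<Longrightarrow> (\<Sum>j\<le>n. Y ^ j * poly (R m j) x) = Vv x Y m"
  unfolding Vv_def by (rule sum.mono_neutral_right) (auto simp: R_gt)

lemma poly_qint: "poly (qint k) x = (\<Sum>i<k. x ^ i)"
  by (simp add: qint_def poly_sum poly_monom)

lemma Vv_Suc: "Vv x Y (Suc n) =
   (\<Sum>a\<le>n. (fact n / fact (n - a)) * Y * poly (qint (Suc a)) x * Vv x Y (n - a))"
proof -
  have "Vv x Y (Suc n) = (\<Sum>j\<le>n. Y ^ Suc j * poly (R (Suc n) (Suc j)) x)"
    unfolding Vv_def by (subst sum.atMost_Suc_shift) simp
  also have "\<dots> = (\<Sum>j\<le>n. \<Sum>a\<le>n. Y ^ Suc j * ((fact n / fact (n - a)) * (poly (qint (Suc a)) x * poly (R (n - a) j) x)))"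
    by (simp add: poly_sum sum_distrib_left lessThan_Suc_atMost)
  also have "\<dots> = (\<Sum>a\<le>n. \<Sum>j\<le>n. Y ^ Suc j * ((fact n / fact (n - a)) * (poly (qint (Suc a)) x * poly (R (n - a) j) x)))"
    by (rule sum.swap)
  also have "\<dots> = (\<Sum>a\<le>n. (fact n / fact (n - a)) * Y * poly (qint (Suc a)) x * (\<Sum>j\<le>n. Y ^ j * poly (R (n - a) j) x))"
    by (simp add: sum_distrib_left sum_divide_distrib algebra_simps)
  also have "\<dots> = (\<Sum>a\<le>n. (fact n / fact (n - a)) * Y * poly (qint (Suc a)) x * Vv x Y (n - a))"
    by (simp add: Vv_ext)
  finally show ?thesis .
qed

lemma one_minus_cX_mult_nth:
  "fps_nth ((1 - fps_const c * fps_X) * (F :: real fps)) n = fps_nth F n - (if n = 0 then 0 else c * fps_nth F (n - 1))"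
proof -
  have "(1 - fps_const c * fps_X) * F = F - fps_const c * (fps_X * F)" by (simp add: algebra_simps)
  then show ?thesis by (simp add: fps_X_mult_nth)
qed

definition D0 :: "real \<Rightarrow> real fps" where
  "D0 x = (1 - fps_X) * (1 - fps_const x * fps_X)"

lemma D0_nth_low:
  assumes "\<And>k. k < n \<Longrightarrow> fps_nth F k = 0"
  shows "fps_nth (D0 x * F) n = fps_nth F n"
proof -
  have eq: "D0 x * F = (1 - fps_X) * ((1 - fps_const x * fps_X) * F)" by (simp add: D0_def mult.assoc)
  show ?thesis unfolding eq using assms by (simp add: one_minus_X_mult_nth one_minus_cX_mult_nth)
qed

lemma ode_unique:
  assumes "fps_nth F 0 = fps_nth G 0"
    and "D0 x * fps_deriv F = fps_const c * F" and "D0 x * fps_deriv G = fps_const c * G"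
  shows "F = G"
proof -
  define H where "H = F - G"
  have H0: "fps_nth H 0 = 0" using assms(1) by (simp add: H_def)
  have HD: "D0 x * fps_deriv H = fps_const c * H"
    using assms(2,3) by (simp add: H_def algebra_simps)
  have "fps_nth H n = 0" for n
  proof (induction n rule: less_induct)
    case (less n)
    show ?case
    proof (cases n)
      case 0 then show ?thesis using H0 by simp
    next
      case (Suc n')
      have low: "fps_nth (fps_deriv H) k = 0" if "k < n'" for k
        using less.IH[of "Suc k"] that Suc by (simp add: fps_deriv_nth)
      have "fps_nth (D0 x * fps_deriv H) n' = fps_nth (fps_deriv H) n'"
        by (rule D0_nth_low) (use low in auto)
      moreover have "fps_nth (fps_const c * H) n' = 0" using less.IH[of n'] Suc by simp
      ultimately have "fps_nth (fps_deriv H) n' = 0" using HD by simp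
      then show ?thesis using Suc by (simp add: fps_deriv_nth)
    qed
  qed
  then show ?thesis unfolding H_def by (intro fps_ext) simp
qed

definition Qf :: "real \<Rightarrow> real fps" where
  "Qf x = Abs_fps (\<lambda>a. poly (qint (Suc a)) x)"

lemma D0_Qf: "D0 x * Qf x = 1"
proof -
  have "(1 - fps_X) * Qf x = Abs_fps (\<lambda>a. x ^ a)"
  proof (rule fps_ext)
    fix n show "fps_nth ((1 - fps_X) * Qf x) n = fps_nth (Abs_fps (\<lambda>a. x ^ a)) n"
      by (cases n) (simp_all add: one_minus_X_mult_nth Qf_def poly_qint)
  qed
  moreover have "(1 - fps_const x * fps_X) * Abs_fps (\<lambda>a. x ^ a) = 1"
    by (rule fps_ext) (auto simp: one_minus_cX_mult_nth power_eq_if)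
  moreover have "D0 x * Qf x = (1 - fps_const x * fps_X) * ((1 - fps_X) * Qf x)"
    by (simp add: D0_def algebra_simps)
  ultimately show ?thesis by simp
qed

definition Psi :: "real \<Rightarrow> real \<Rightarrow> real fps" where
  "Psi x Y = Abs_fps (\<lambda>n. Vv x Y n / fact n)"

lemma Psi_deriv: "fps_deriv (Psi x Y) = fps_const Y * Qf x * Psi x Y"
proof (rule fps_ext)
  fix n
  have "fps_nth (fps_deriv (Psi x Y)) n = Vv x Y (Suc n) / fact n"
    by (simp add: Psi_def fps_deriv_nth field_simps del: of_nat_Suc)
  also have "\<dots> = (\<Sum>a\<le>n. Y * poly (qint (Suc a)) x * (Vv x Y (n - a) / fact (n - a)))"
    unfolding Vv_Suc by (simp add: sum_divide_distrib field_simps)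
  also have "\<dots> = Y * fps_nth (Qf x * Psi x Y) n"
    by (simp add: fps_mult_nth Qf_def Psi_def atLeast0AtMost sum_distrib_left mult.assoc)
  also have "\<dots> = fps_nth (fps_const Y * Qf x * Psi x Y) n"
    by (simp add: mult.assoc)
  finally show "fps_nth (fps_deriv (Psi x Y)) n = fps_nth (fps_const Y * Qf x * Psi x Y) n" .
qed

lemma Psi_ode: "D0 x * fps_deriv (Psi x Y) = fps_const Y * Psi x Y"
proof -
  have "D0 x * fps_deriv (Psi x Y) = fps_const Y * (D0 x * Qf x) * Psi x Y"
    by (simp add: Psi_deriv algebra_simps)
  then show ?thesis by (simp add: D0_Qf)
qed

definition Af :: "real \<Rightarrow> real \<Rightarrow> real fps" where
  "Af x y = Abs_fps (\<lambda>j. (y gchoose j) * (- x) ^ j)"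
definition Bf :: "real \<Rightarrow> real fps" where
  "Bf y = Abs_fps (\<lambda>i. (y + of_nat i - 1) gchoose i)"

lemma Af_ode: "(1 - fps_const x * fps_X) * fps_deriv (Af x y) = - (fps_const x * fps_const y) * Af x y"
proof (rule fps_ext)
  fix n
  have g: "of_nat (Suc n) * (y gchoose Suc n) = (y - of_nat n) * (y gchoose n)" for n
    using gbinomial_mult_1[of y n] by (simp add: algebra_simps)
  show "fps_nth ((1 - fps_const x * fps_X) * fps_deriv (Af x y)) n = fps_nth (- (fps_const x * fps_const y) * Af x y) n"
  proof (cases n)
    case 0 then show ?thesis using g[of 0] by (simp add: one_minus_cX_mult_nth Af_def fps_deriv_nth)
  next
    case (Suc k)
    have "fps_nth ((1 - fps_const x * fps_X) * fps_deriv (Af x y)) n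
        = of_nat (Suc n) * (y gchoose Suc n) * (- x) ^ Suc n - x * (of_nat n * (y gchoose n) * (- x) ^ n)"
      using Suc by (simp add: one_minus_cX_mult_nth Af_def fps_deriv_nth del: of_nat_Suc)
    also have "\<dots> = - (x * y) * ((y gchoose n) * (- x) ^ n)"
      unfolding g by (simp add: algebra_simps)
    finally show ?thesis by (simp add: Af_def)
  qed
qed

lemma Bf_ode: "(1 - fps_X) * fps_deriv (Bf y) = fps_const y * Bf y"
proof (rule fps_ext)
  fix n
  have g: "of_nat (Suc n) * ((y + of_nat (Suc n) - 1) gchoose Suc n) = (y + of_nat n) * ((y + of_nat n - 1) gchoose n)"
    for n using gbinomial_absorption[where k=n and a="y + of_nat n"] by simp
  show "fps_nth ((1 - fps_X) * fps_deriv (Bf y)) n = fps_nth (fps_const y * Bf y) n"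
  proof (cases n)
    case 0 then show ?thesis using g[of 0] by (simp add: one_minus_X_mult_nth Bf_def fps_deriv_nth)
  next
    case (Suc k)
    have "fps_nth ((1 - fps_X) * fps_deriv (Bf y)) n
        = of_nat (Suc n) * ((y + of_nat (Suc n) - 1) gchoose Suc n) - of_nat n * ((y + of_nat n - 1) gchoose n)"
      using Suc by (simp add: one_minus_X_mult_nth Bf_def fps_deriv_nth del: of_nat_Suc)
    also have "\<dots> = y * ((y + of_nat n - 1) gchoose n)"
      unfolding g by (simp add: algebra_simps)
    finally show ?thesis by (simp add: Bf_def)
  qed
qed

lemma ring_ode_aux:
  fixes X c y A A' B B' :: "'a::comm_ring_1"
  assumes "(1 - c * X) * A' = - (c * y) * A" "(1 - X) * B' = y * B"
  shows "(1 - X) * (1 - c * X) * (A * B' + A' * B) = y * (1 - c) * (A * B)"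
proof -
  have "(1 - X) * (1 - c * X) * (A * B' + A' * B) = (1 - X) * B * ((1 - c * X) * A') + (1 - c * X) * A * ((1 - X) * B')"
    by (simp add: algebra_simps)
  also have "\<dots> = y * (1 - c) * (A * B) + y * c * X * (A * B) - y * c * X * (A * B)"
    unfolding assms by (simp add: algebra_simps)
  finally show ?thesis by simp
qed

lemma Phi_ode: "D0 x * fps_deriv (Af x y * Bf y) = fps_const (y * (1 - x)) * (Af x y * Bf y)"
proof -
  have "D0 x * fps_deriv (Af x y * Bf y) = fps_const y * (1 - fps_const x) * (Af x y * Bf y)"
    unfolding D0_def fps_deriv_mult
    by (rule ring_ode_aux[where X=fps_X and c="fps_const x" and y="fps_const y" and A="Af x y"
          and A'="fps_deriv (Af x y)" and B="Bf y" and B'="fps_deriv (Bf y)", OF Af_ode Bf_ode])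
  then show ?thesis by (simp add: algebra_simps)
qed

lemma Vv_eq: "Vv x (y * (1 - x)) n / fact n = (\<Sum>j\<le>n. ((y gchoose j) * (- x) ^ j) * ((y + of_nat (n - j) - 1) gchoose (n - j)))"
proof -
  have "Psi x (y * (1 - x)) = Af x y * Bf y"
    by (rule ode_unique[OF _ Psi_ode Phi_ode])
       (simp add: Psi_def Vv_def Af_def Bf_def)
  then have "fps_nth (Psi x (y * (1 - x))) n = fps_nth (Af x y * Bf y) n" by simp
  then show ?thesis by (simp add: Psi_def fps_mult_nth Af_def Bf_def atLeast0AtMost)
qed


lemma poly_pochhammer: "poly (pochhammer p k) y = pochhammer (poly p y) k"
  by (induction k) (simp_all add: pochhammer_Suc)

lemma PP:
  fixes y :: real
  assumes jr: "0 < j + r"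
  shows "pochhammer (y - of_nat j + 1) j * pochhammer y r
   = y * pochhammer (y - of_nat j + 1) (j + r - 1)"
proof (cases j)
  case 0
  then obtain r' where r: "r = Suc r'" using jr by (cases r) auto
  then show ?thesis unfolding 0 r by (simp add: pochhammer_rec)
next
  case (Suc j')
  have z: "y - of_nat j + 1 + of_nat j' = y" using Suc by simp
  have "pochhammer (y - of_nat j + 1) j = pochhammer (y - of_nat j + 1) j' * y"
    using Suc z by (simp only: pochhammer_Suc)
  moreover have "pochhammer (y - of_nat j + 1) (j' + r) = pochhammer (y - of_nat j + 1) j' * pochhammer y r"
    using pochhammer_product'[of "y - of_nat j + 1" j' r] z by simp
  ultimately show ?thesis using Suc by (simp add: algebra_simps)
qed

definition PJ :: "nat \<Rightarrow> nat \<Rightarrow> real poly" where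
  "PJ N j = pochhammer [:1 - real j, 1:] (N - 1)"

lemma poly_PJ: "poly (PJ N j) y = pochhammer (y - real j + 1) (N - 1)"
  by (simp add: PJ_def poly_pochhammer algebra_simps)

lemma term_eq:
  assumes "j \<le> N" "1 \<le> N"
  shows "fact N * (((y::real) gchoose j) * ((y + of_nat (N - j) - 1) gchoose (N - j)))
    = real (N choose j) * (y * poly (PJ N j) y)"
proof -
  have f: "fact N = real (N choose j) * fact j * fact (N - j)"
    using binomial_fact[OF assms(1), where 'a=real] by (simp add: field_simps)
  have a: "fact j * (y gchoose j) = pochhammer (y - of_nat j + 1) j"
    by (simp add: gbinomial_pochhammer')
  have b: "fact (N - j) * ((y + of_nat (N - j) - 1) gchoose (N - j)) = pochhammer y (N - j)"
    by (simp add: gbinomial_pochhammer')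
  have "fact N * ((y gchoose j) * ((y + of_nat (N - j) - 1) gchoose (N - j)))
      = real (N choose j) * ((fact j * (y gchoose j)) * (fact (N - j) * ((y + of_nat (N - j) - 1) gchoose (N - j))))"
    unfolding f by (simp add: mult_ac)
  also have "\<dots> = real (N choose j) * (pochhammer (y - of_nat j + 1) j * pochhammer y (N - j))"
    unfolding a b ..
  also have "\<dots> = real (N choose j) * (y * pochhammer (y - of_nat j + 1) (j + (N - j) - 1))"
    using PP[of j "N - j" y] assms by simp
  also have "\<dots> = real (N choose j) * (y * poly (PJ N j) y)"
    using assms by (simp add: poly_PJ)
  finally show ?thesis .
qed

lemma Vv_closed:
  assumes "1 \<le> N"
  shows "Vv x (y * (1 - x)) N = (\<Sum>j\<le>N. real (N choose j) * (- x) ^ j * (y * poly (PJ N j) y))"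
proof -
  have "Vv x (y * (1 - x)) N = fact N * (Vv x (y * (1 - x)) N / fact N)" by simp
  also have "\<dots> = (\<Sum>j\<le>N. (- x) ^ j * (fact N * ((y gchoose j) * ((y + of_nat (N - j) - 1) gchoose (N - j)))))"
    unfolding Vv_eq by (simp add: sum_distrib_left mult_ac)
  also have "\<dots> = (\<Sum>j\<le>N. real (N choose j) * (- x) ^ j * (y * poly (PJ N j) y))"
  proof (intro sum.cong refl)
    fix j assume "j \<in> {..N}"
    then have j: "j \<le> N" by simp
    show "(- x) ^ j * (fact N * ((y gchoose j) * ((y + of_nat (N - j) - 1) gchoose (N - j))))
        = real (N choose j) * (- x) ^ j * (y * poly (PJ N j) y)"
      unfolding term_eq[OF j assms] by (simp add: algebra_simps)
  qed
  finally show ?thesis .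
qed

definition Pm :: "nat \<Rightarrow> nat \<Rightarrow> real poly" where
  "Pm N m = (\<Sum>j\<le>N. monom ((- 1) ^ j * real (N choose j) * coeff (PJ N j) m) j)"

lemma coeff_Pm: "coeff (Pm N m) i = (- 1) ^ i * real (N choose i) * coeff (PJ N i) m"
  by (simp add: Pm_def coeff_sum)

lemma Pm_eq:
  assumes "1 \<le> N"
  shows "Pm N m = [:1, -1:] ^ Suc m * R N (Suc m)"
proof -
  have "poly (Pm N m) x = poly ([:1, -1:] ^ Suc m * R N (Suc m)) x" for x
  proof -
    define LP where "LP = (\<Sum>j\<le>N. monom ((1 - x) ^ j * poly (R N j) x) j)"
    define RP where "RP = pCons 0 (\<Sum>j\<le>N. smult (real (N choose j) * (- x) ^ j) (PJ N j))"
    have "poly LP y = poly RP y" for y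
    proof -
      have "poly LP y = Vv x (y * (1 - x)) N"
        unfolding LP_def Vv_def poly_sum poly_monom power_mult_distrib by (simp add: mult_ac)
      also have "\<dots> = poly RP y"
        unfolding Vv_closed[OF assms] by (simp add: RP_def poly_sum sum_distrib_left algebra_simps)
      finally show ?thesis .
    qed
    then have "poly LP = poly RP" by (rule ext)
    then have "LP = RP" by (simp only: poly_eq_poly_eq_iff)
    then have "coeff LP (Suc m) = coeff RP (Suc m)" by simp
    moreover have "coeff LP (Suc m) = (1 - x) ^ Suc m * poly (R N (Suc m)) x"
      by (simp add: LP_def coeff_sum R_gt)
    moreover have "coeff RP (Suc m) = (\<Sum>j\<le>N. real (N choose j) * (- x) ^ j * coeff (PJ N j) m)"
      by (simp add: RP_def coeff_sum)
    moreover have "poly (Pm N m) x = (\<Sum>j\<le>N. real (N choose j) * (- x) ^ j * coeff (PJ N j) m)"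
      by (simp add: Pm_def poly_sum poly_monom power_minus[of x] mult_ac)
    moreover have "poly ([:1, -1:] ^ Suc m * R N (Suc m)) x = (1 - x) ^ Suc m * poly (R N (Suc m)) x"
      by (simp only: poly_mult poly_power) simp
    ultimately show ?thesis by simp
  qed
  then have "poly (Pm N m) = poly ([:1, -1:] ^ Suc m * R N (Suc m))" by (rule ext)
  then show ?thesis by (simp only: poly_eq_poly_eq_iff)
qed


lemma fps_one_minus: "fps_of_poly [:1, -1:] = (1 - fps_X :: real fps)"
  by (rule fps_ext) (simp add: coeff_pCons split: nat.split)

lemma coeff_formula:
  assumes "1 \<le> N" "1 \<le> k"
  shows "(\<Sum>j<k. (- 1) ^ j * real (N choose j) * real (k - j) ^ m * coeff (PJ N j) m)
       = coeff (R N (Suc m) * E m) (k - 1)"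
proof -
  have "fps_of_poly (Pm N m) * Sf m = fps_of_poly (R N (Suc m)) * ((1 - fps_X) ^ Suc m * Sf m)"
  proof -
    have "fps_of_poly ([:1, -1:] ^ Suc m * R N (Suc m)) = (1 - fps_X) ^ Suc m * fps_of_poly (R N (Suc m))"
      by (simp only: fps_of_poly_mult fps_of_poly_power fps_one_minus)
    then show ?thesis unfolding Pm_eq[OF assms(1)] by (simp only: mult_ac)
  qed
  also have "\<dots> = fps_of_poly (R N (Suc m) * E m)"
    by (simp only: eulerian_fps fps_of_poly_mult)
  finally have eq: "fps_of_poly (Pm N m) * Sf m = fps_of_poly (R N (Suc m) * E m)" .
  have "coeff (R N (Suc m) * E m) (k - 1) = fps_nth (fps_of_poly (Pm N m) * Sf m) (k - 1)"
    unfolding eq by simp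
  also have "\<dots> = (\<Sum>i = 0..k - 1. coeff (Pm N m) i * real (k - 1 - i + 1) ^ m)"
    by (simp add: fps_mult_nth Sf_def)
  also have "\<dots> = (\<Sum>j<k. (- 1) ^ j * real (N choose j) * real (k - j) ^ m * coeff (PJ N j) m)"
  proof -
    have e1: "{0..k - 1} = {..<k}" using assms(2) by auto
    have e2: "real (k - 1 - i + 1) = real (k - i)" if "i < k" for i
      using that by simp
    show ?thesis unfolding e1 by (intro sum.cong refl) (simp add: coeff_Pm e2 mult_ac)
  qed
  finally show ?thesis by simp
qed


definition lin :: "nat \<Rightarrow> nat \<Rightarrow> real \<Rightarrow> real poly" where
  "lin N j a = PJ N j \<circ>\<^sub>p [:0, a:]"

definition Qk :: "nat \<Rightarrow> nat \<Rightarrow> real poly" where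
  "Qk N k = smult (1 / fact (N - 1))
     (\<Sum>j<k. smult ((- 1) ^ j * real (N choose j)) (lin N j (real k - real j)))"

lemma coeff_Qk:
  assumes "1 \<le> N" "1 \<le> k"
  shows "coeff (Qk N k) m = coeff (R N (Suc m) * E m) (k - 1) / fact (N - 1)"
proof -
  have "coeff (Qk N k) m = (\<Sum>j<k. (- 1) ^ j * real (N choose j) * real (k - j) ^ m * coeff (PJ N j) m) / fact (N - 1)"
    by (simp add: Qk_def coeff_sum lin_def coeff_pcompose_linear of_nat_diff sum_divide_distrib mult_ac)
  then show ?thesis using coeff_formula[OF assms] by simp
qed

lemma poly_Qk: "poly (Qk N k) t = (\<Sum>j<k. (- 1) ^ j * real (N choose j)
     * pochhammer ((real k - real j) * t - real j + 1) (N - 1)) / fact (N - 1)"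
  by (simp add: Qk_def poly_sum lin_def poly_pcompose poly_PJ sum_divide_distrib algebra_simps)

lemma Qk_mono:
  assumes "3 \<le> k" "2 * k \<le> N"
  shows "coeff (Qk N 2) m \<le> coeff (Qk N k) m"
proof -
  have N: "1 \<le> N" using assms by auto
  have c2: "coeff (Qk N 2) m = coeff (R N (Suc m) * E m) 1 / fact (N - 1)"
    using coeff_Qk[OF N, of 2] by simp
  have ck: "coeff (Qk N k) m = coeff (R N (Suc m) * E m) (k - 1) / fact (N - 1)"
    using coeff_Qk[OF N, of k] assms by simp
  have "coeff (R N (Suc m) * E m) 1 \<le> coeff (R N (Suc m) * E m) (k - 1)"
  proof (cases "Suc m \<le> N")
    case True
    have sg: "SG (R N (Suc m) * E m) ((N - Suc m) + (m - 1))"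
      by (rule SG_mult[OF SG_R SG_E])
    have "k - 1 < (N - Suc m) + (m - 1)" using True assms by (cases m) auto
    then show ?thesis using sg assms unfolding SG_def by auto
  next
    case False
    then show ?thesis by (simp add: R_gt)
  qed
  then show ?thesis unfolding c2 ck by (simp add: divide_right_mono)
qed


fun cnt :: "nat \<Rightarrow> nat \<Rightarrow> nat \<Rightarrow> nat" where
  "cnt 0 t s = (if s = 0 then 1 else 0)"
| "cnt (Suc n) t s = (\<Sum>a\<le>t. if a \<le> s then cnt n t (s - a) else 0)"

definition cntI :: "nat \<Rightarrow> nat \<Rightarrow> int \<Rightarrow> int" where
  "cntI n t X = (if X < 0 then 0 else int (cnt n t (nat X)))"

lemma cntI_Suc: "cntI (Suc n) t X = (\<Sum>a\<le>t. cntI n t (X - int a))"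
proof (cases "X < 0")
  case True then show ?thesis by (simp add: cntI_def)
next
  case False
  have "cntI (Suc n) t X = (\<Sum>a\<le>t. int (if a \<le> nat X then cnt n t (nat X - a) else 0))"
    using False by (simp add: cntI_def)
  also have "\<dots> = (\<Sum>a\<le>t. cntI n t (X - int a))"
    by (intro sum.cong refl) (use False in \<open>auto simp: cntI_def nat_diff_distrib\<close>)
  finally show ?thesis .
qed

definition h :: "nat \<Rightarrow> int \<Rightarrow> int" where
  "h n X = (if X < 0 then 0 else int ((nat X + n - 1) choose (nat X)))"

lemma h_pascal:
  assumes "1 \<le> n"
  shows "h (Suc n) Y - h (Suc n) (Y - 1) = h n Y"
proof (cases "Y < 0")
  case True then show ?thesis by (simp add: h_def)
next
  case False
  show ?thesis
  proof (cases "Y = 0")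
    case True then show ?thesis by (simp add: h_def)
  next
    case False
    then obtain y where y: "nat Y = Suc y" "Y > 0" using \<open>\<not> Y < 0\<close> by (cases "nat Y") auto
    have "nat (Y - 1) = y" using y by auto
    moreover have "Suc y + Suc n - 1 = Suc (y + n)" by simp
    moreover have "Suc y + n - 1 = y + n" using assms by simp
    moreover have "y + Suc n - 1 = y + n" by simp
    ultimately show ?thesis using y by (simp add: h_def binomial_Suc_Suc)
  qed
qed

lemma h_telescope:
  assumes "1 \<le> n"
  shows "(\<Sum>a\<le>t. h n (Y - int a)) = h (Suc n) Y - h (Suc n) (Y - (int t + 1))"
proof (induction t)
  case 0 then show ?case using h_pascal[OF assms, of Y] by simp
next
  case (Suc t)
  have "h n (Y - int (Suc t)) = h (Suc n) (Y - int (Suc t)) - h (Suc n) (Y - int (Suc t) - 1)"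
    using h_pascal[OF assms, of "Y - int (Suc t)"] by simp
  then show ?case using Suc by (simp add: algebra_simps)
qed

lemma alt_binom_shift:
  fixes g :: "nat \<Rightarrow> int"
  shows "(\<Sum>j\<le>Suc n. (- 1) ^ j * int (Suc n choose j) * g j)
       = (\<Sum>j\<le>n. (- 1) ^ j * int (n choose j) * (g j - g (Suc j)))"
proof -
  define a where "a = (\<Sum>j\<le>n. (- 1) ^ j * int (n choose j) * g j)"
  define b where "b = (\<Sum>j\<le>n. (- 1) ^ j * int (n choose j) * g (Suc j))"
  define c where "c = (\<Sum>j\<le>n. (- 1) ^ j * int (n choose Suc j) * g (Suc j))"
  have s1: "(\<Sum>j\<le>Suc n. (- 1) ^ j * int (Suc n choose j) * g j)
      = g 0 + (\<Sum>j\<le>n. (- 1) ^ (Suc j) * int (Suc n choose Suc j) * g (Suc j))"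
    by (simp only: sum.atMost_Suc_shift) simp
  have "(\<Sum>j\<le>n. (- 1) ^ (Suc j) * int (Suc n choose Suc j) * g (Suc j))
      = (\<Sum>j\<le>n. - ((- 1) ^ j * int (n choose j) * g (Suc j)) - (- 1) ^ j * int (n choose Suc j) * g (Suc j))"
    by (intro sum.cong refl) (simp add: algebra_simps)
  also have "\<dots> = - b - c" by (simp only: sum_subtractf sum_negf b_def c_def)
  finally have s2: "(\<Sum>j\<le>n. (- 1) ^ (Suc j) * int (Suc n choose Suc j) * g (Suc j)) = - b - c" .
  have "a = (\<Sum>j\<le>Suc n. (- 1) ^ j * int (n choose j) * g j)" by (simp add: a_def)
  also have "\<dots> = g 0 + (\<Sum>j\<le>n. (- 1) ^ (Suc j) * int (n choose Suc j) * g (Suc j))"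
    by (simp only: sum.atMost_Suc_shift) simp
  also have "(\<Sum>j\<le>n. (- 1) ^ (Suc j) * int (n choose Suc j) * g (Suc j)) = (\<Sum>j\<le>n. - ((- 1) ^ j * int (n choose Suc j) * g (Suc j)))"
    by (intro sum.cong refl) simp
  also have "\<dots> = - c" by (simp only: sum_negf c_def)
  finally have s3: "a = g 0 - c" by simp
  have "(\<Sum>j\<le>n. (- 1) ^ j * int (n choose j) * (g j - g (Suc j)))
      = (\<Sum>j\<le>n. (- 1) ^ j * int (n choose j) * g j - (- 1) ^ j * int (n choose j) * g (Suc j))"
    by (intro sum.cong refl) (simp add: algebra_simps)
  also have "\<dots> = a - b" by (simp only: sum_subtractf a_def b_def)
  finally have s4: "(\<Sum>j\<le>n. (- 1) ^ j * int (n choose j) * (g j - g (Suc j))) = a - b" .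
  show ?thesis using s1 s2 s3 s4 by linarith
qed

lemma cnt_formula:
  assumes "1 \<le> n"
  shows "cntI n t X = (\<Sum>j\<le>n. (- 1) ^ j * int (n choose j) * h n (X - int j * (int t + 1)))"
  using assms
proof (induction n arbitrary: X rule: nat_induct_at_least)
  case base
  have c1: "cnt (Suc 0) t s = (if s \<le> t then 1 else 0)" for s
  proof -
    have "cnt (Suc 0) t s = (\<Sum>a\<le>t. if a = s then 1 else 0)"
      unfolding cnt.simps by (intro sum.cong refl) auto
    then show ?thesis by (simp add: sum.delta)
  qed
  have "cntI 1 t X = (if X < 0 then 0 else if nat X \<le> t then 1 else 0)"
    unfolding cntI_def One_nat_def c1 by simp
  then show ?case by (auto simp: h_def)
next
  case (Suc n)
  have "cntI (Suc n) t X = (\<Sum>a\<le>t. \<Sum>j\<le>n. (- 1) ^ j * int (n choose j) * h n (X - int a - int j * (int t + 1)))"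
    unfolding cntI_Suc Suc.IH ..
  also have "\<dots> = (\<Sum>j\<le>n. (- 1) ^ j * int (n choose j) * (\<Sum>a\<le>t. h n ((X - int j * (int t + 1)) - int a)))"
    by (subst sum.swap) (simp add: sum_distrib_left algebra_simps)
  also have "\<dots> = (\<Sum>j\<le>n. (- 1) ^ j * int (n choose j) * (h (Suc n) (X - int j * (int t + 1)) - h (Suc n) (X - int (Suc j) * (int t + 1))))"
  proof (intro sum.cong refl)
    fix j
    have e: "X - int j * (int t + 1) - (int t + 1) = X - int (Suc j) * (int t + 1)"
      by (simp add: algebra_simps)
    show "(- 1) ^ j * int (n choose j) * (\<Sum>a\<le>t. h n ((X - int j * (int t + 1)) - int a))
      = (- 1) ^ j * int (n choose j) * (h (Suc n) (X - int j * (int t + 1)) - h (Suc n) (X - int (Suc j) * (int t + 1)))"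
      unfolding h_telescope[OF Suc.hyps] e ..
  qed
  also have "\<dots> = (\<Sum>j\<le>Suc n. (- 1) ^ j * int (Suc n choose j) * h (Suc n) (X - int j * (int t + 1)))"
    by (rule alt_binom_shift[symmetric])
  finally show ?case .
qed


lemma h_poch:
  assumes n: "1 \<le> n" and X: "1 - int n \<le> X"
  shows "real_of_int (h n X) = pochhammer (of_int X + 1) (n - 1) / fact (n - 1)"
proof (cases "X < 0")
  case True
  have "pochhammer (of_int X + 1 :: real) (n - 1) = 0"
  proof -
    have "of_int X + 1 = - (of_nat (nat (- X - 1)) :: real)" using True by simp
    moreover have "nat (- X - 1) < n - 1" using True X n by linarith
    ultimately show ?thesis by (auto simp: pochhammer_eq_0_iff)
  qed
  then show ?thesis using True by (simp add: h_def)
next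
  case False
  define x where "x = nat X"
  have Xx: "X = int x" using False by (simp add: x_def)
  have "h n X = int ((x + n - 1) choose x)" using False by (simp add: h_def x_def)
  also have "(x + n - 1) choose x = (x + n - 1) choose (n - 1)"
    using binomial_symmetric[of x "x + n - 1"] n by simp
  finally have "real_of_int (h n X) = real ((x + n - 1) choose (n - 1))" by simp
  also have "\<dots> = (real (x + n - 1) gchoose (n - 1))" by (simp add: binomial_gbinomial)
  also have "\<dots> = pochhammer (real (x + n - 1) - real (n - 1) + 1) (n - 1) / fact (n - 1)"
    by (simp add: gbinomial_pochhammer')
  also have "real (x + n - 1) - real (n - 1) + 1 = of_int X + 1"
    using n Xx by (simp add: of_nat_diff)
  finally show ?thesis .
qed

lemma count_poly:
  assumes "1 \<le> k" "k \<le> N"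
  shows "real (cnt N t (k * t)) = poly (Qk N k) (real t)"
proof -
  have N: "1 \<le> N" using assms by simp
  define f where "f j = (- 1) ^ j * int (N choose j) * h N (int (k * t) - int j * (int t + 1))" for j
  have zero: "f i = 0" if "k \<le> i" for i
  proof -
    have "int k * int t \<le> int i * int t" using that by (simp add: mult_right_mono)
    then have "int (k * t) - int i * (int t + 1) < 0" using that assms by (simp add: algebra_simps)
    then show ?thesis by (simp add: h_def f_def)
  qed
  have S: "(\<Sum>j\<le>N. f j) = (\<Sum>j<k. f j)"
    by (rule sum.mono_neutral_right) (use assms zero in auto)
  have "real (cnt N t (k * t)) = real_of_int (cntI N t (int (k * t)))"
    unfolding cntI_def by (simp del: of_nat_mult)
  also have "\<dots> = real_of_int (\<Sum>j\<le>N. f j)"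
    unfolding f_def by (simp only: cnt_formula[OF N])
  also have "\<dots> = real_of_int (\<Sum>j<k. f j)" by (simp only: S)
  also have "\<dots> = (\<Sum>j<k. (- 1) ^ j * real (N choose j) * (pochhammer ((real k - real j) * real t - real j + 1) (N - 1) / fact (N - 1)))"
  proof (simp only: of_int_sum, intro sum.cong refl)
    fix j assume "j \<in> {..<k}"
    then have j: "j < k" by simp
    have lb: "1 - int N \<le> int (k * t) - int j * (int t + 1)"
    proof -
      have "int j * int t \<le> int (k - 1) * int t" using j by (intro mult_right_mono) auto
      then show ?thesis using j assms by (simp add: algebra_simps of_nat_diff)
    qed
    have arg: "real_of_int (int (k * t) - int j * (int t + 1)) + 1 = (real k - real j) * real t - real j + 1"
      by (simp add: algebra_simps)
    show "real_of_int (f j) = (- 1) ^ j * real (N choose j) * (pochhammer ((real k - real j) * real t - real j + 1) (N - 1) / fact (N - 1))"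
      using h_poch[OF N lb] arg by (simp add: f_def)
  qed
  also have "\<dots> = poly (Qk N k) (real t)"
    by (simp add: poly_Qk sum_divide_distrib mult_ac)
  finally show ?thesis .
qed


definition cntset :: "'a set \<Rightarrow> nat \<Rightarrow> nat \<Rightarrow> ('a \<Rightarrow> nat) set" where
  "cntset I t s = {f. (\<forall>i\<in>I. f i \<le> t) \<and> (\<forall>i. i \<notin> I \<longrightarrow> f i = 0) \<and> sum f I = s}"

lemma cntset_insert:
  assumes "finite I" "i \<notin> I"
  shows "cntset (insert i I) t s = (\<Union>a\<in>{a. a \<le> t \<and> a \<le> s}. (\<lambda>f. f(i := a)) ` cntset I t (s - a))"
proof (intro equalityI subsetI)
  fix f assume f: "f \<in> cntset (insert i I) t s"
  define g where "g = f(i := 0)"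
  have "sum f (insert i I) = f i + sum f I" using assms by simp
  moreover have "sum g I = sum f I" unfolding g_def using assms by (intro sum.cong) auto
  ultimately have "g \<in> cntset I t (s - f i)" using f assms unfolding cntset_def g_def by auto
  moreover have "f = g(i := f i)" by (simp add: g_def)
  moreover have "f i \<le> t" "f i \<le> s" using f assms unfolding cntset_def by auto
  ultimately show "f \<in> (\<Union>a\<in>{a. a \<le> t \<and> a \<le> s}. (\<lambda>f. f(i := a)) ` cntset I t (s - a))" by blast
next
  fix f assume "f \<in> (\<Union>a\<in>{a. a \<le> t \<and> a \<le> s}. (\<lambda>f. f(i := a)) ` cntset I t (s - a))"
  then obtain a g where a: "a \<le> t" "a \<le> s" and g: "g \<in> cntset I t (s - a)" and fg: "f = g(i := a)" by auto
  have "sum f I = sum g I" unfolding fg using assms by (intro sum.cong) auto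
  then show "f \<in> cntset (insert i I) t s" using a g assms unfolding cntset_def fg by auto
qed

lemma card_cntset:
  assumes "finite I"
  shows "finite (cntset I t s) \<and> card (cntset I t s) = cnt (card I) t s"
  using assms
proof (induction I arbitrary: s rule: finite_induct)
  case empty
  have e: "cntset {} t s = (if s = 0 then {\<lambda>_. 0} else {})" unfolding cntset_def by auto
  show ?case unfolding e by simp
next
  case (insert i I)
  have eq: "cntset (insert i I) t s = (\<Union>a\<in>{a. a \<le> t \<and> a \<le> s}. (\<lambda>f. f(i := a)) ` cntset I t (s - a))"
    using cntset_insert[OF insert.hyps(1,2)] .
  have inj: "inj_on (\<lambda>f. f(i := a)) (cntset I t s')" for a s'
  proof (rule inj_onI)
    fix f g assume "f \<in> cntset I t s'" "g \<in> cntset I t s'" "f(i := a) = g(i := a)"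
    then have "f i = 0" "g i = 0" using insert.hyps(2) unfolding cntset_def by auto
    with \<open>f(i := a) = g(i := a)\<close> show "f = g" by (metis fun_upd_triv fun_upd_upd)
  qed
  have fin: "finite {a. a \<le> t \<and> a \<le> s}" by simp
  have disj: "pairwise (\<lambda>a b. (\<lambda>f. f(i := a)) ` cntset I t (s - a) \<inter> (\<lambda>f. f(i := b)) ` cntset I t (s - b) = {}) {a. a \<le> t \<and> a \<le> s}"
    unfolding pairwise_def by (auto, metis fun_upd_same)
  have "finite (cntset (insert i I) t s)"
    unfolding eq using insert.IH by auto
  moreover have "card (cntset (insert i I) t s) = (\<Sum>a\<in>{a. a \<le> t \<and> a \<le> s}. card ((\<lambda>f. f(i := a)) ` cntset I t (s - a)))"
    unfolding eq by (rule card_UN_disjoint) (use insert.IH disj in \<open>auto simp: pairwise_def\<close>)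
  moreover have "\<dots> = (\<Sum>a\<in>{a. a \<le> t \<and> a \<le> s}. cnt (card I) t (s - a))"
    by (intro sum.cong refl) (simp add: card_image[OF inj] insert.IH)
  moreover have "\<dots> = (\<Sum>a\<le>t. if a \<le> s then cnt (card I) t (s - a) else 0)"
  proof -
    have e: "{a. a \<le> t \<and> a \<le> s} = {a \<in> {..t}. a \<le> s}" by auto
    show ?thesis unfolding e by (rule sum.inter_filter) simp
  qed
  ultimately show ?case using insert.hyps by simp
qed

definition LP :: "nat \<Rightarrow> nat \<Rightarrow> (real^'n::finite) set" where
  "LP k t = {x. (\<forall>i. x $ i \<in> \<int>) \<and> (\<forall>i. 0 \<le> x $ i \<and> x $ i \<le> real t) \<and> (\<Sum>i\<in>UNIV. x $ i) = real (k * t)}"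

lemma card_LP: "card (LP k t :: (real^'n::finite) set) = cnt CARD('n) t (k * t)"
proof -
  define F where "F = cntset (UNIV :: 'n set) t (k * t)"
  define v where "v = (\<lambda>f :: 'n \<Rightarrow> nat. (\<chi> i. real (f i)) :: real^'n)"
  have inj: "inj_on v F"
    by (rule inj_onI) (auto simp: v_def vec_eq_iff fun_eq_iff)
  have img: "v ` F = LP k t"
  proof (intro equalityI subsetI)
    fix x assume "x \<in> v ` F"
    then obtain f where f: "f \<in> F" and x: "x = v f" by auto
    have "(\<Sum>i\<in>UNIV. x $ i) = real (\<Sum>i\<in>UNIV. f i)" by (simp add: x v_def)
    also have "(\<Sum>i\<in>UNIV. f i) = k * t" using f unfolding F_def cntset_def by auto
    finally have sx: "(\<Sum>i\<in>UNIV. x $ i) = real (k * t)" .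
    have "x $ i \<in> \<int> \<and> 0 \<le> x $ i \<and> x $ i \<le> real t" for i
      using f unfolding F_def cntset_def x v_def by auto
    then show "x \<in> LP k t" using sx unfolding LP_def by blast
  next
    fix x assume x: "x \<in> (LP k t :: (real^'n) set)"
    define f where "f i = nat \<lfloor>x $ i\<rfloor>" for i
    have xf: "x $ i = real (f i)" for i
    proof -
      have xi: "x $ i \<in> \<int>" "0 \<le> x $ i" using x unfolding LP_def by auto
      then obtain m where m: "x $ i = of_int m" by (auto elim: Ints_cases)
      then have "0 \<le> m" using xi by simp
      then show ?thesis unfolding f_def m by simp
    qed
    have "real (\<Sum>i\<in>UNIV. f i) = real (k * t)"
      using x xf unfolding LP_def by (simp add: xf)
    then have "(\<Sum>i\<in>UNIV. f i) = k * t" by (simp only: of_nat_eq_iff)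
    moreover have "f i \<le> t" for i
    proof -
      have "x $ i \<le> real t" using x unfolding LP_def by auto
      then show ?thesis unfolding xf by simp
    qed
    ultimately have "f \<in> F" unfolding F_def cntset_def by auto
    moreover have "x = v f" by (simp add: v_def vec_eq_iff xf)
    ultimately show "x \<in> v ` F" by auto
  qed
  have "card (LP k t :: (real^'n) set) = card F" unfolding img[symmetric] by (rule card_image[OF inj])
  also have "\<dots> = cnt CARD('n) t (k * t)" unfolding F_def using card_cntset[of "UNIV :: 'n set"] by simp
  finally show ?thesis .
qed


definition ind :: "'n set \<Rightarrow> real^'n::finite" where
  "ind B = (\<chi> i. if i \<in> B then 1 else 0)"

lemma ind_nth [simp]: "ind B $ i = (if i \<in> B then 1 else 0)"
  by (simp add: ind_def)

lemma sum_ind: "(\<Sum>i\<in>UNIV. ind B $ i) = real (card (B :: 'n::finite set))"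
proof -
  have "(\<Sum>i\<in>UNIV. ind B $ i) = (\<Sum>i\<in>UNIV. if i \<in> B then 1 else 0)" by simp
  also have "\<dots> = real (card B)" by (simp add: sum.If_cases)
  finally show ?thesis .
qed

lemma UMP_eq: "uniform_matroid_polytope k = convex hull {ind B | B :: 'n::finite set. card B = k}"
  by (simp add: uniform_matroid_polytope_def ind_def)

definition Box :: "nat \<Rightarrow> (real^'n::finite) set" where
  "Box k = {y. (\<forall>i. 0 \<le> y $ i \<and> y $ i \<le> 1) \<and> (\<Sum>i\<in>UNIV. y $ i) = real k}"

lemma convex_Box: "convex (Box k)"
  unfolding convex_def Box_def
proof (intro ballI allI impI, clarify)
  fix x y :: "real^'n" and u v :: real
  assume x: "\<forall>i. 0 \<le> x $ i \<and> x $ i \<le> 1" "(\<Sum>i\<in>UNIV. x $ i) = real k"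
    and y: "\<forall>i. 0 \<le> y $ i \<and> y $ i \<le> 1" "(\<Sum>i\<in>UNIV. y $ i) = real k"
    and uv: "0 \<le> u" "0 \<le> v" "u + v = 1"
  have c: "0 \<le> u * x $ i + v * y $ i \<and> u * x $ i + v * y $ i \<le> 1" for i
  proof -
    have "u * x $ i \<le> u" "v * y $ i \<le> v" using x y uv by (auto intro: mult_left_le)
    then show ?thesis using x y uv by (auto intro: add_nonneg_nonneg mult_nonneg_nonneg)
  qed
  have "(\<Sum>i\<in>UNIV. u * x $ i + v * y $ i) = u * (\<Sum>i\<in>UNIV. x $ i) + v * (\<Sum>i\<in>UNIV. y $ i)"
    by (simp add: sum.distrib sum_distrib_left)
  also have "\<dots> = (u + v) * real k" using x y by (simp add: algebra_simps)
  finally have s: "(\<Sum>i\<in>UNIV. u * x $ i + v * y $ i) = real k" using uv by simp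
  show "(\<forall>i. 0 \<le> (u *\<^sub>R x + v *\<^sub>R y) $ i \<and> (u *\<^sub>R x + v *\<^sub>R y) $ i \<le> 1) \<and>
        (\<Sum>i\<in>UNIV. (u *\<^sub>R x + v *\<^sub>R y) $ i) = real k"
    using c s by simp
qed

lemma UMP_sub_Box: "uniform_matroid_polytope k \<subseteq> (Box k :: (real^'n::finite) set)"
  unfolding UMP_eq
proof (rule hull_minimal)
  show "{ind B | B :: 'n set. card B = k} \<subseteq> Box k"
    unfolding Box_def using sum_ind by auto
  show "convex (Box k :: (real^'n) set)" by (rule convex_Box)
qed

lemma Ints_lt_imp_le: "a \<in> \<int> \<Longrightarrow> b \<in> \<int> \<Longrightarrow> a < b \<Longrightarrow> a + 1 \<le> (b :: real)"
  by (elim Ints_cases) simp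

lemma decomp:
  assumes "1 \<le> t"
  shows "x \<in> LP k t \<Longrightarrow> (1 / real t) *\<^sub>R x \<in> (uniform_matroid_polytope k :: (real^'n::finite) set)"
  using assms
proof (induction t arbitrary: x rule: nat_induct_at_least)
  case base
  define B where "B = {i. x $ i = 1}"
  have x01: "x $ i = 0 \<or> x $ i = 1" for i
  proof -
    have "x $ i \<in> \<int>" "0 \<le> x $ i" "x $ i \<le> 1" using base unfolding LP_def by auto
    then show ?thesis by (elim Ints_cases) auto
  qed
  have xB: "x = ind B"
    unfolding vec_eq_iff B_def using x01 by auto
  have "real (card B) = real k" using base sum_ind[of B] unfolding xB[symmetric] LP_def by simp
  then have "card B = k" by simp
  then have "x \<in> {ind B | B :: 'n set. card B = k}" using xB by auto
  then show ?case unfolding UMP_eq by (simp add: hull_inc)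
next
  case (Suc t)
  have xi: "x $ i \<in> \<int>" "0 \<le> x $ i" "x $ i \<le> real t + 1" for i
    using Suc.prems unfolding LP_def by (auto simp: add.commute)
  have xs: "(\<Sum>i\<in>UNIV. x $ i) = real k * (real t + 1)"
    using Suc.prems unfolding LP_def by (simp add: algebra_simps)
  define A where "A = {i. x $ i = real t + 1}"
  define C where "C = {i. 1 \<le> x $ i}"
  have AC: "A \<subseteq> C" unfolding A_def C_def by auto
  have cA: "card A \<le> k"
  proof -
    have "real (card A) * (real t + 1) = (\<Sum>i\<in>A. x $ i)" unfolding A_def by simp
    also have "\<dots> \<le> (\<Sum>i\<in>UNIV. x $ i)" by (rule sum_mono2) (use xi in auto)
    finally have "real (card A) * (real t + 1) \<le> real k * (real t + 1)" using xs by simp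
    then have "real (card A) \<le> real k" by (rule mult_right_le_imp_le) simp
    then show ?thesis by simp
  qed
  have cC: "k \<le> card C"
  proof -
    have z: "x $ i = 0" if "i \<notin> C" for i
    proof -
      have "x $ i < 1" using that unfolding C_def by auto
      then have "x $ i + 1 \<le> 1" by (intro Ints_lt_imp_le[OF xi(1)[of i]]) auto
      then show ?thesis using xi(2)[of i] by simp
    qed
    have "real k * (real t + 1) = (\<Sum>i\<in>C. x $ i)"
      unfolding xs[symmetric] by (rule sum.mono_neutral_right) (use z in auto)
    also have "\<dots> \<le> (\<Sum>i\<in>C. real t + 1)" by (rule sum_mono) (use xi in auto)
    also have "\<dots> = real (card C) * (real t + 1)" by simp
    finally have "real k \<le> real (card C)" by (rule mult_right_le_imp_le) simp
    then show ?thesis by simp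
  qed
  have "k - card A \<le> card (C - A)" using cA cC AC by (simp add: card_Diff_subset)
  then obtain D where D: "D \<subseteq> C - A" "card D = k - card A" using ex_card by blast
  define B where "B = A \<union> D"
  have cB: "card B = k" unfolding B_def using D cA
    by (subst card_Un_disjoint) auto
  have BC: "B \<subseteq> C" unfolding B_def using D AC by auto
  have AB: "A \<subseteq> B" unfolding B_def by auto
  define x' where "x' = x - ind B"
  have x'i: "x' $ i = x $ i - (if i \<in> B then 1 else 0)" for i by (simp add: x'_def)
  have "x' \<in> LP k t"
    unfolding LP_def
  proof (intro CollectI conjI allI)
    fix i
    show "x' $ i \<in> \<int>" unfolding x'i using xi by auto
    show "0 \<le> x' $ i"
    proof (cases "i \<in> B")
      case True then have "1 \<le> x $ i" using BC unfolding C_def by auto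
      then show ?thesis unfolding x'i using True by simp
    next
      case False then show ?thesis unfolding x'i using xi by simp
    qed
    show "x' $ i \<le> real t"
    proof (cases "i \<in> B")
      case True then show ?thesis unfolding x'i using xi[of i] by simp
    next
      case False
      then have "i \<notin> A" using AB by auto
      then have "x $ i < real t + 1" using xi[of i] unfolding A_def by auto
      then have "x $ i + 1 \<le> real t + 1" by (intro Ints_lt_imp_le[OF xi(1)[of i]]) auto
      then show ?thesis unfolding x'i using False by simp
    qed
  next
    have "(\<Sum>i\<in>UNIV. x' $ i) = (\<Sum>i\<in>UNIV. x $ i) - (\<Sum>i\<in>UNIV. ind B $ i)"
      by (simp add: x'_def sum_subtractf)
    also have "\<dots> = real (k * t)" unfolding xs sum_ind cB by (simp add: algebra_simps)
    finally show "(\<Sum>i\<in>UNIV. x' $ i) = real (k * t)" .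
  qed
  then have p: "(1 / real t) *\<^sub>R x' \<in> uniform_matroid_polytope k" by (rule Suc.IH)
  have q: "ind B \<in> (uniform_matroid_polytope k :: (real^'n) set)"
    unfolding UMP_eq using cB by (auto intro: hull_inc)
  have "(real t / (real t + 1)) *\<^sub>R ((1 / real t) *\<^sub>R x') + (1 / (real t + 1)) *\<^sub>R ind B
      \<in> (uniform_matroid_polytope k :: (real^'n) set)"
    by (rule convexD[OF _ p q]) (auto simp: UMP_eq field_simps)
  moreover have "(real t / (real t + 1)) *\<^sub>R ((1 / real t) *\<^sub>R x') + (1 / (real t + 1)) *\<^sub>R ind B
      = (1 / real (Suc t)) *\<^sub>R x"
    using Suc.hyps by (simp add: vec_eq_iff x'_def field_simps)
  ultimately show ?case by simp
qed

lemma lattice_set: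
  assumes "k \<le> CARD('n::finite)"
  shows "{x :: real^'n. (\<forall>i. x $ i \<in> \<int>) \<and> x \<in> (\<lambda>y. real t *\<^sub>R y) ` uniform_matroid_polytope k} = LP k t"
proof (intro equalityI subsetI)
  fix x :: "real^'n"
  assume "x \<in> {x. (\<forall>i. x $ i \<in> \<int>) \<and> x \<in> (\<lambda>y. real t *\<^sub>R y) ` uniform_matroid_polytope k}"
  then obtain p where xi: "\<forall>i. x $ i \<in> \<int>" and p: "p \<in> uniform_matroid_polytope k" and x: "x = real t *\<^sub>R p"
    by auto
  have pb: "p \<in> Box k" using p UMP_sub_Box by auto
  then have "0 \<le> x $ i \<and> x $ i \<le> real t" for i
    unfolding x Box_def by (auto intro: mult_left_le mult_nonneg_nonneg)
  moreover have "(\<Sum>i\<in>UNIV. x $ i) = real (k * t)"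
    using pb unfolding x Box_def by (simp add: sum_distrib_left[symmetric])
  ultimately show "x \<in> LP k t" using xi unfolding LP_def by auto
next
  fix x :: "real^'n" assume x: "x \<in> LP k t"
  have xi: "\<forall>i. x $ i \<in> \<int>" using x unfolding LP_def by auto
  show "x \<in> {x. (\<forall>i. x $ i \<in> \<int>) \<and> x \<in> (\<lambda>y. real t *\<^sub>R y) ` uniform_matroid_polytope k}"
  proof (cases "t = 0")
    case True
    have h: "0 \<le> x $ i \<and> x $ i \<le> 0" for i using x True unfolding LP_def by auto
    have "x = 0" unfolding vec_eq_iff using h by (simp add: order.antisym)
    obtain B :: "'n set" where "card B = k" using ex_card[of k "UNIV :: 'n set"] assms by auto
    then have "ind B \<in> (uniform_matroid_polytope k :: (real^'n) set)"
      unfolding UMP_eq by (auto intro: hull_inc)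
    then have "x \<in> (\<lambda>y. real t *\<^sub>R y) ` uniform_matroid_polytope k"
      using \<open>x = 0\<close> True by (auto intro!: image_eqI[where x="ind B"])
    then show ?thesis using xi by auto
  next
    case False
    then have "(1 / real t) *\<^sub>R x \<in> uniform_matroid_polytope k" using decomp[of t x k] x by simp
    moreover have "x = real t *\<^sub>R ((1 / real t) *\<^sub>R x)" using False by simp
    ultimately show ?thesis using xi by blast
  qed
qed


lemma poly_eq_on_nat:
  fixes p q :: "real poly"
  assumes "\<And>t::nat. poly p (real t) = poly q (real t)"
  shows "p = q"
proof (rule ccontr)
  assume "p \<noteq> q"
  then have "p - q \<noteq> 0" by simp
  then have fin: "finite {x. poly (p - q) x = 0}" by (rule poly_roots_finite)
  have "range real \<subseteq> {x. poly (p - q) x = 0}" using assms by auto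
  then have "finite (range real)" using fin by (rule finite_subset)
  moreover have "inj real" by (simp add: inj_on_def)
  ultimately have "finite (UNIV :: nat set)" using finite_imageD by blast
  then show False by simp
qed

lemma ehrhart_UMP:
  assumes "1 \<le> k" "k \<le> CARD('n::finite)"
  shows "ehrhart_poly (uniform_matroid_polytope k :: (real^'n) set) = Qk CARD('n) k"
proof -
  have val: "poly (Qk CARD('n) k) (real t) = real (lattice_count (uniform_matroid_polytope k :: (real^'n) set) t)" for t
  proof -
    have "lattice_count (uniform_matroid_polytope k :: (real^'n) set) t = card (LP k t :: (real^'n) set)"
      unfolding lattice_count_def using lattice_set[OF assms(2), of t] by simp
    also have "\<dots> = cnt CARD('n) t (k * t)" by (rule card_LP)
    finally show ?thesis using count_poly[OF assms] by simp
  qed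
  show ?thesis unfolding ehrhart_poly_def
  proof (rule the_equality)
    show "\<forall>t. poly (Qk CARD('n) k) (real t) = real (lattice_count (uniform_matroid_polytope k :: (real^'n) set) t)"
      using val by simp
  next
    fix p assume "\<forall>t. poly p (real t) = real (lattice_count (uniform_matroid_polytope k :: (real^'n) set) t)"
    then show "p = Qk CARD('n) k" using val by (intro poly_eq_on_nat) simp
  qed
qed

theorem lemma6p3:
  fixes k :: nat
  assumes "3 \<le> k" and "2 * k \<le> CARD('n::finite)"
  shows "\<forall>m. coeff (ehrhart_poly (uniform_matroid_polytope 2 :: (real^'n) set)) m
             \<le> coeff (ehrhart_poly (uniform_matroid_polytope k :: (real^'n) set)) m"
proof
  fix m
  have e2: "ehrhart_poly (uniform_matroid_polytope 2 :: (real^'n) set) = Qk CARD('n) 2"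
    by (rule ehrhart_UMP) (use assms in auto)
  have ek: "ehrhart_poly (uniform_matroid_polytope k :: (real^'n) set) = Qk CARD('n) k"
    by (rule ehrhart_UMP) (use assms in auto)
  show "coeff (ehrhart_poly (uniform_matroid_polytope 2 :: (real^'n) set)) m
             \<le> coeff (ehrhart_poly (uniform_matroid_polytope k :: (real^'n) set)) m"
    unfolding e2 ek by (rule Qk_mono[OF assms])
qed


end
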